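(* Let $X \subset \mathbb{Z}^2$ and let $V_1,\dots,V_n \subset X$ be thick convex digital disks. Let $X'=\bigcup_{i=1}^n V_i$. For each $i$ let $C_i$ be a bounding curve of $V_i$, let $B_{1,i}$ be the union of the maximal horizontal and maximal vertical line segments contained in $C_i$, and let $B_{2,i}$ be the set of endpoints of maximal slanted line segments contained in $C_i$. Then $$B=(X\setminus X')\cup\bigcup_{i=1}^n (B_{1,i}\cup B_{2,i})$$ is a freezing set for $(X,c_2)$.
   Context: Adjacencies: for $x\neq y$ in $\mathbb{Z}^2$, $x,y$ are $c_1$-adjacent if they differ by 1 in exactly one coordinate and agree in the other; $c_2$-adjacent if each coordinate differs by at most 1. Write $x\leftrightarrow_\kappa y$ for $\kappa$-adjacency. A $\kappa$-path is a finite sequence of points with consecutive points equal or $\kappa$-adjacent. A function $f:(X,\kappa)\to(X,\kappa)$ is $\kappa$-continuous ($f\in C(X,\kappa)$) if $x\leftrightarrow_\kappa x'$ implies $f(x)=f(x')$ or $f(x)\leftrightarrow_\kappa f(x')$. $\mathrm{Fix}(f)=\{x: f(x)=x\}$. A set $A\subset X$ is a freezing set for $(X,\kappa)$ if every $f\in C(X,\kappa)$ with $A\subset \mathrm{Fix}(f)$ satisfies $f=\mathrm{id}_X$. A (digital) line segment is a $c_2$-connected set of collinear points of $\mathbb{Z}^2$; it is necessarily horizontal, vertical, or of slope $\pm1$ (called slanted). A $c_2$-closed curve is a $c_2$-path $s_0,\dots,s_{m-1}$ with $s_0=s_{m-1}$ and $s_i\ne s_j$ for $0<|i-j|<m-1$.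 If $S$ is a $c_2$-closed curve such that $\mathbb{Z}^2\setminus S$ has exactly two $c_1$-components, one finite and one infinite, the union $D$ of $S$ and the finite component is a digital disk, $S$ is a bounding curve of $D$, and the finite component is the interior $Int(S)$ (also written $Int(X)$). $Bd_2(X)=\{x\in X : \exists y\in\mathbb{Z}^2\setminus X,\ y\leftrightarrow_{c_2}x\}$. A digital disk $X$ is thick if for some bounding curve $S$ of $X$: (i) for every slanted segment $T$ of $Bd_2(X)$ and every non-endpoint $p\in T$ there is $c\in X$ with $c\leftrightarrow_{c_2}p$ but $c$ not $c_1$-adjacent to $p$ (i.e. $c$ is diagonally adjacent to $p$) on the interior side; (ii) if $p$ is the vertex of a $90^\circ$ interior angle $\theta$ of $S$, there is $q\in Int(X)$ such that, if $\theta$ has horizontal and vertical sides, $q\leftrightarrow_{c_2}p$ and $q$ is not $c_1$-adjacent to $p$, and if $\theta$ has slanted sides, $q\leftrightarrow_{c_1}p$; (iii) if $p$ is the vertex of a $135^\circ$ interior angle $\theta$ of $S$, there are $b,b'\in X$ in the interior of $\theta$ with $b\leftrightarrow_{c_2}p$, $b$ not $c_1$-adjacent to $p$, and $b'\leftrightarrow_{c_1}p$. A set $X\subset\mathbb{Z}^2$ is (digitally) convex if $X$ equals the set of integer points of its Euclidean convex hull. *)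

theory Defs
  imports "HOL-Analysis.Analysis"
begin

type_synonym pt = "int \<times> int"

definition c1_adj :: "pt \<Rightarrow> pt \<Rightarrow> bool" where
  "c1_adj x y \<longleftrightarrow> x \<noteq> y \<and> \<bar>fst x - fst y\<bar> + \<bar>snd x - snd y\<bar> = 1"

definition c2_adj :: "pt \<Rightarrow> pt \<Rightarrow> bool" where
  "c2_adj x y \<longleftrightarrow> x \<noteq> y \<and> \<bar>fst x - fst y\<bar> \<le> 1 \<and> \<bar>snd x - snd y\<bar> \<le> 1"

text \<open>f is kappa-continuous as a self-map of X (only values on X matter).\<close>
definition digitally_continuous :: "pt set \<Rightarrow> (pt \<Rightarrow> pt \<Rightarrow> bool) \<Rightarrow> (pt \<Rightarrow> pt) \<Rightarrow> bool" where
  "digitally_continuous X \<kappa> f \<longleftrightarrow>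
     (\<forall>x\<in>X. f x \<in> X) \<and>
     (\<forall>x\<in>X. \<forall>x'\<in>X. \<kappa> x x' \<longrightarrow> f x = f x' \<or> \<kappa> (f x) (f x'))"

definition freezing_set :: "pt set \<Rightarrow> (pt \<Rightarrow> pt \<Rightarrow> bool) \<Rightarrow> pt set \<Rightarrow> bool" where
  "freezing_set X \<kappa> A \<longleftrightarrow> A \<subseteq> X \<and>
     (\<forall>f. digitally_continuous X \<kappa> f \<and> (\<forall>a\<in>A. f a = a) \<longrightarrow> (\<forall>x\<in>X. f x = x))"

definition adj_in :: "(pt \<Rightarrow> pt \<Rightarrow> bool) \<Rightarrow> pt set \<Rightarrow> pt \<Rightarrow> pt \<Rightarrow> bool" where
  "adj_in \<kappa> Y a b \<longleftrightarrow> a \<in> Y \<and> b \<in> Y \<and> \<kappa> a b"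

definition connected_in :: "(pt \<Rightarrow> pt \<Rightarrow> bool) \<Rightarrow> pt set \<Rightarrow> bool" where
  "connected_in \<kappa> Y \<longleftrightarrow> (\<forall>p\<in>Y. \<forall>q\<in>Y. (adj_in \<kappa> Y)\<^sup>*\<^sup>* p q)"

definition component_of :: "(pt \<Rightarrow> pt \<Rightarrow> bool) \<Rightarrow> pt set \<Rightarrow> pt \<Rightarrow> pt set" where
  "component_of \<kappa> Y x = {y. (adj_in \<kappa> Y)\<^sup>*\<^sup>* x y}"

definition components_of :: "(pt \<Rightarrow> pt \<Rightarrow> bool) \<Rightarrow> pt set \<Rightarrow> pt set set" where
  "components_of \<kappa> Y = {component_of \<kappa> Y x | x. x \<in> Y}"

definition closed_curve :: "(nat \<Rightarrow> pt) \<Rightarrow> nat \<Rightarrow> bool" where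
  "closed_curve s m \<longleftrightarrow> m \<ge> 1 \<and> s 0 = s (m - 1) \<and>
     (\<forall>i. i + 1 < m \<longrightarrow> s i = s (i + 1) \<or> c2_adj (s i) (s (i + 1))) \<and>
     (\<forall>i j. i < j \<and> j < m \<and> j - i < m - 1 \<longrightarrow> s i \<noteq> s j)"

definition curve_set :: "(nat \<Rightarrow> pt) \<Rightarrow> nat \<Rightarrow> pt set" where
  "curve_set s m = s ` {..<m}"

definition bounding_curve :: "pt set \<Rightarrow> (nat \<Rightarrow> pt) \<Rightarrow> nat \<Rightarrow> bool" where
  "bounding_curve D s m \<longleftrightarrow> closed_curve s m \<and>
     (\<exists>F I. components_of c1_adj (UNIV - curve_set s m) = {F, I} \<and> finite F \<and> infinite I
            \<and> D = curve_set s m \<union> F)"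

definition digital_disk :: "pt set \<Rightarrow> bool" where
  "digital_disk D \<longleftrightarrow> (\<exists>s m. bounding_curve D s m)"

definition curve_interior :: "(nat \<Rightarrow> pt) \<Rightarrow> nat \<Rightarrow> pt set" where
  "curve_interior s m = \<Union>{F \<in> components_of c1_adj (UNIV - curve_set s m). finite F}"

definition Bd2 :: "pt set \<Rightarrow> pt set" where
  "Bd2 X = {x \<in> X. \<exists>y. y \<notin> X \<and> c2_adj y x}"

text \<open>Keys of the four line directions: a set is contained in a horizontal
 (resp. vertical, slope 1, slope -1) line iff the key is constant on it.\<close>
definition key_h :: "pt \<Rightarrow> int" where "key_h p = snd p"
definition key_v :: "pt \<Rightarrow> int" where "key_v p = fst p"
definition key_d1 :: "pt \<Rightarrow> int" where "key_d1 p = fst p - snd p"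
definition key_d2 :: "pt \<Rightarrow> int" where "key_d2 p = fst p + snd p"

definition line_seg :: "(pt \<Rightarrow> int) \<Rightarrow> pt set \<Rightarrow> bool" where
  "line_seg k T \<longleftrightarrow> card T \<ge> 2 \<and> (\<forall>p\<in>T. \<forall>q\<in>T. k p = k q) \<and> connected_in c2_adj T"

definition max_seg_in :: "(pt \<Rightarrow> int) \<Rightarrow> pt set \<Rightarrow> pt set \<Rightarrow> bool" where
  "max_seg_in k C T \<longleftrightarrow> line_seg k T \<and> T \<subseteq> C \<and>
     (\<forall>T'. line_seg k T' \<and> T' \<subseteq> C \<and> T \<subseteq> T' \<longrightarrow> T' = T)"

text \<open>Endpoints of a slanted segment (extreme first coordinates).\<close>
definition seg_endpoints :: "pt set \<Rightarrow> pt set" where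
  "seg_endpoints T = {p \<in> T. fst p = Min (fst ` T) \<or> fst p = Max (fst ` T)}"

text \<open>The 8 directions, numbered counterclockwise in steps of 45 degrees.\<close>
definition dirvec :: "nat \<Rightarrow> pt" where
  "dirvec k = [(1,0),(1,1),(0,1),(-1,1),(-1,0),(-1,-1),(0,-1),(1,-1)] ! (k mod 8)"

definition dir_idx :: "pt \<Rightarrow> nat" where
  "dir_idx d = (THE k. k < 8 \<and> dirvec k = d)"

definition vsub :: "pt \<Rightarrow> pt \<Rightarrow> pt" where
  "vsub a b = (fst a - fst b, snd a - snd b)"

definition vadd :: "pt \<Rightarrow> pt \<Rightarrow> pt" where
  "vadd a b = (fst a + fst b, snd a + snd b)"

text \<open>Twice the signed (shoelace) area; positive iff the curve is counterclockwise.\<close>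
definition signed_area2 :: "(nat \<Rightarrow> pt) \<Rightarrow> nat \<Rightarrow> int" where
  "signed_area2 s m = (\<Sum>i<m - 1. fst (s i) * snd (s (i + 1)) - fst (s (i + 1)) * snd (s i))"

text \<open>For vertex index i < m-1 of the closed curve (indices taken cyclically mod m-1):
 prv/nxt are direction indices of the rays towards the previous/next point.\<close>
definition prv_dir :: "(nat \<Rightarrow> pt) \<Rightarrow> nat \<Rightarrow> nat \<Rightarrow> nat" where
  "prv_dir s m i = dir_idx (vsub (s ((i + (m - 1) - 1) mod (m - 1))) (s i))"

definition nxt_dir :: "(nat \<Rightarrow> pt) \<Rightarrow> nat \<Rightarrow> nat \<Rightarrow> nat" where
  "nxt_dir s m i = dir_idx (vsub (s ((i + 1) mod (m - 1))) (s i))"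

text \<open>Interior angle at s i, in units of 45 degrees, and the direction index from
 which the interior of the angle is swept counterclockwise.\<close>
definition int_angle :: "(nat \<Rightarrow> pt) \<Rightarrow> nat \<Rightarrow> nat \<Rightarrow> nat" where
  "int_angle s m i =
     (if signed_area2 s m > 0 then (prv_dir s m i + 8 - nxt_dir s m i) mod 8
      else (nxt_dir s m i + 8 - prv_dir s m i) mod 8)"

definition angle_start :: "(nat \<Rightarrow> pt) \<Rightarrow> nat \<Rightarrow> nat \<Rightarrow> nat" where
  "angle_start s m i = (if signed_area2 s m > 0 then nxt_dir s m i else prv_dir s m i)"

definition angle_interior_nbrs :: "(nat \<Rightarrow> pt) \<Rightarrow> nat \<Rightarrow> nat \<Rightarrow> pt set" where
  "angle_interior_nbrs s m i =
     {vadd (s i) (dirvec (angle_start s m i + j)) | j. 0 < j \<and> j < int_angle s m i}"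

definition thick_cond_slanted :: "pt set \<Rightarrow> bool" where
  "thick_cond_slanted X \<longleftrightarrow>
     (\<forall>k\<in>{key_d1, key_d2}. \<forall>T. line_seg k T \<and> T \<subseteq> Bd2 X \<longrightarrow>
        (\<forall>p \<in> T - seg_endpoints T. \<exists>c\<in>X. c2_adj c p \<and> \<not> c1_adj c p \<and> k c \<noteq> k p))"

definition thick_cond_90 :: "pt set \<Rightarrow> (nat \<Rightarrow> pt) \<Rightarrow> nat \<Rightarrow> bool" where
  "thick_cond_90 X s m \<longleftrightarrow>
     (\<forall>i < m - 1. int_angle s m i = 2 \<longrightarrow>
        (\<exists>q \<in> curve_interior s m. c2_adj q (s i) \<and>
           (if even (nxt_dir s m i) then \<not> c1_adj q (s i) else c1_adj q (s i))))"

definition thick_cond_135 :: "pt set \<Rightarrow> (nat \<Rightarrow> pt) \<Rightarrow> nat \<Rightarrow> bool" where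
  "thick_cond_135 X s m \<longleftrightarrow>
     (\<forall>i < m - 1. int_angle s m i = 3 \<longrightarrow>
        (\<exists>b b'. b \<in> X \<and> b' \<in> X \<and> b \<in> angle_interior_nbrs s m i \<and> b' \<in> angle_interior_nbrs s m i
           \<and> c2_adj b (s i) \<and> \<not> c1_adj b (s i) \<and> c1_adj b' (s i)))"

definition thick :: "pt set \<Rightarrow> bool" where
  "thick X \<longleftrightarrow> (\<exists>s m. bounding_curve X s m \<and> thick_cond_slanted X \<and>
                       thick_cond_90 X s m \<and> thick_cond_135 X s m)"

definition emb :: "pt \<Rightarrow> real \<times> real" where
  "emb p = (real_of_int (fst p), real_of_int (snd p))"

definition digitally_convex :: "pt set \<Rightarrow> bool" where
  "digitally_convex X \<longleftrightarrow> X = {p. emb p \<in> convex hull (emb ` X)}"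

definition B1_of :: "pt set \<Rightarrow> pt set" where
  "B1_of C = \<Union>{T. max_seg_in key_h C T \<or> max_seg_in key_v C T}"

definition B2_of :: "pt set \<Rightarrow> pt set" where
  "B2_of C = \<Union>{seg_endpoints T | T. max_seg_in key_d1 C T \<or> max_seg_in key_d2 C T}"

end

theory Submission
  imports Defs
begin

lemma cont_adj:
  assumes "digitally_continuous X c2_adj f" "x \<in> X" "y \<in> X" "c2_adj x y"
  shows "\<bar>fst (f x) - fst (f y)\<bar> \<le> 1 \<and> \<bar>snd (f x) - snd (f y)\<bar> \<le> 1"
  using assms unfolding digitally_continuous_def c2_adj_def by fastforce

lemma lip_nat:
  assumes "\<And>a. lo \<le> a \<Longrightarrow> a < hi \<Longrightarrow> \<bar>g (a+1) - g a\<bar> \<le> (1::int)"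
  shows "lo \<le> a \<Longrightarrow> a + int k \<le> hi \<Longrightarrow> \<bar>g (a + int k) - g a\<bar> \<le> int k"
proof (induction k)
  case 0 then show ?case by simp
next
  case (Suc k)
  then have "\<bar>g (a + int k) - g a\<bar> \<le> int k" by simp
  moreover have "\<bar>g (a + int k + 1) - g (a + int k)\<bar> \<le> 1" using Suc.prems assms by simp
  moreover have "a + int (Suc k) = a + int k + 1" by simp
  ultimately show ?case by arith
qed

lemma lip:
  assumes "\<And>a. lo \<le> a \<Longrightarrow> a < hi \<Longrightarrow> \<bar>g (a+1) - g a\<bar> \<le> (1::int)"
    "lo \<le> a" "a \<le> b" "b \<le> hi"
  shows "\<bar>g b - g a\<bar> \<le> b - a"
  using lip_nat[where lo=lo and hi=hi and g=g and a=a and k="nat (b - a)", OF assms(1)] assms(2-4) by simp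

lemma pin:
  assumes cont: "digitally_continuous X c2_adj f"
    and inX: "\<And>a. lo \<le> a \<Longrightarrow> a \<le> hi \<Longrightarrow> P a \<in> X"
    and adj: "\<And>a. lo \<le> a \<Longrightarrow> a < hi \<Longrightarrow> c2_adj (P a) (P (a+1))"
    and lo: "f (P lo) = P lo" and hi: "f (P hi) = P hi"
    and a: "lo \<le> a" "a \<le> hi"
  shows "\<bar>fst (f (P a)) - fst (P lo)\<bar> \<le> a - lo \<and> \<bar>fst (f (P a)) - fst (P hi)\<bar> \<le> hi - a
    \<and> \<bar>snd (f (P a)) - snd (P lo)\<bar> \<le> a - lo \<and> \<bar>snd (f (P a)) - snd (P hi)\<bar> \<le> hi - a"
proof -
  have s: "\<bar>fst (f (P (b+1))) - fst (f (P b))\<bar> \<le> 1 \<and> \<bar>snd (f (P (b+1))) - snd (f (P b))\<bar> \<le> 1"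
    if "lo \<le> b" "b < hi" for b
    using cont_adj[OF cont inX[of b] inX[of "b+1"] adj[OF that]] that by (auto simp: abs_minus_commute)
  have 1: "\<bar>(fst \<circ> f \<circ> P) a - (fst \<circ> f \<circ> P) lo\<bar> \<le> a - lo"
    by (rule lip[of lo hi]) (use s a in auto)
  have 2: "\<bar>(fst \<circ> f \<circ> P) hi - (fst \<circ> f \<circ> P) a\<bar> \<le> hi - a"
    by (rule lip[of lo hi]) (use s a in auto)
  have 3: "\<bar>(snd \<circ> f \<circ> P) a - (snd \<circ> f \<circ> P) lo\<bar> \<le> a - lo"
    by (rule lip[of lo hi]) (use s a in auto)
  have 4: "\<bar>(snd \<circ> f \<circ> P) hi - (snd \<circ> f \<circ> P) a\<bar> \<le> hi - a"
    by (rule lip[of lo hi]) (use s a in auto)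
  show ?thesis using 1 2 3 4 lo hi by (simp add: abs_minus_commute)
qed

definition ray :: "pt \<Rightarrow> pt \<Rightarrow> nat \<Rightarrow> pt" where
  "ray x d j = (fst x + int j * fst d, snd x + int j * snd d)"

definition unitdir :: "pt \<Rightarrow> bool" where
  "unitdir d \<longleftrightarrow> d \<in> {(1,0),(-1,0),(0,1),(0,-1)}"

lemma ray_c1: "unitdir d \<Longrightarrow> c1_adj (ray x d j) (ray x d (Suc j))"
  by (auto simp: unitdir_def ray_def c1_adj_def algebra_simps)

lemma ray_0[simp]: "ray x d 0 = x" by (simp add: ray_def)

lemma ray_inj: "unitdir d \<Longrightarrow> inj (ray x d)"
  by (auto simp: unitdir_def ray_def inj_def)

lemma rt_in: "(adj_in \<kappa> Y)\<^sup>*\<^sup>* y z \<Longrightarrow> y \<in> Y \<Longrightarrow> z \<in> Y"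
  by (induction rule: rtranclp_induct) (auto simp: adj_in_def)

lemma comp_reach: "F \<in> components_of \<kappa> Y \<Longrightarrow> x \<in> F \<Longrightarrow> (adj_in \<kappa> Y)\<^sup>*\<^sup>* x z \<Longrightarrow> z \<in> F"
  by (auto simp: components_of_def component_of_def intro: rtranclp_trans)

lemma comp_sub: "F \<in> components_of \<kappa> Y \<Longrightarrow> F \<subseteq> Y"
  by (auto simp: components_of_def component_of_def intro: rt_in)

lemma comp_self: "y \<in> Y \<Longrightarrow> y \<in> component_of \<kappa> Y y"
  by (simp add: component_of_def)

lemma ray_reach:
  assumes "unitdir d" "\<forall>j'\<le>j. ray x d j' \<notin> C"
  shows "(adj_in c1_adj (UNIV - C))\<^sup>*\<^sup>* x (ray x d j)"
  using assms(2)
proof (induction j)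
  case 0 then show ?case by simp
next
  case (Suc j)
  then have "(adj_in c1_adj (UNIV - C))\<^sup>*\<^sup>* x (ray x d j)" by simp
  moreover have "adj_in c1_adj (UNIV - C) (ray x d j) (ray x d (Suc j))"
    using Suc.prems ray_c1[OF assms(1)] by (auto simp: adj_in_def)
  ultimately show ?case by (rule rtranclp.rtrancl_into_rtrancl)
qed

lemma ray_first:
  assumes "F \<in> components_of c1_adj (UNIV - C)" "finite F" "x \<in> F" "unitdir d"
  shows "\<exists>J. ray x d J \<in> C \<and> (\<forall>j<J. ray x d j \<in> F)"
proof -
  have "\<exists>j. ray x d j \<in> C"
  proof (rule ccontr)
    assume "\<not> (\<exists>j. ray x d j \<in> C)"
    then have "range (ray x d) \<subseteq> F"
      using comp_reach[OF assms(1) assms(3) ray_reach[OF assms(4)]] by blast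
    then have "finite (range (ray x d))" using assms(2) finite_subset by blast
    then have "finite (UNIV :: nat set)" using finite_imageD ray_inj[OF assms(4)] by blast
    then show False by simp
  qed
  then obtain j0 where "ray x d j0 \<in> C" by blast
  define J where "J = (LEAST j. ray x d j \<in> C)"
  have J: "ray x d J \<in> C" unfolding J_def by (rule LeastI) fact
  have "ray x d j \<in> F" if "j < J" for j
  proof -
    have "\<forall>j'\<le>j. ray x d j' \<notin> C"
    proof (intro allI impI)
      fix j' assume "j' \<le> j"
      then have "j' < J" using that by simp
      then show "ray x d j' \<notin> C" unfolding J_def by (rule not_less_Least)
    qed
    then show ?thesis using comp_reach[OF assms(1) assms(3) ray_reach[OF assms(4)]] by blast
  qed
  then show ?thesis using J by blast
qed

lemma interior_fixed:
  assumes cont: "digitally_continuous X c2_adj f"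
    and F: "F \<in> components_of c1_adj (UNIV - C)" "finite F" "x \<in> F" "F \<subseteq> X" "C \<subseteq> X"
    and fixC: "\<forall>c\<in>C. f c = c"
  shows "f x = x"
proof -
  obtain jL where L: "ray x (-1,0) jL \<in> C" "\<forall>j<jL. ray x (-1,0) j \<in> F"
    using ray_first[OF F(1-3), of "(-1,0)"] by (auto simp: unitdir_def)
  obtain jR where R: "ray x (1,0) jR \<in> C" "\<forall>j<jR. ray x (1,0) j \<in> F"
    using ray_first[OF F(1-3), of "(1,0)"] by (auto simp: unitdir_def)
  obtain jD where D: "ray x (0,-1) jD \<in> C" "\<forall>j<jD. ray x (0,-1) j \<in> F"
    using ray_first[OF F(1-3), of "(0,-1)"] by (auto simp: unitdir_def)
  obtain jU where U: "ray x (0,1) jU \<in> C" "\<forall>j<jU. ray x (0,1) j \<in> F"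
    using ray_first[OF F(1-3), of "(0,1)"] by (auto simp: unitdir_def)
  have hX: "(a, snd x) \<in> X" if a: "fst x - int jL \<le> a" "a \<le> fst x + int jR" for a
  proof (cases "a \<le> fst x")
    case True
    let ?j = "nat (fst x - a)"
    have e: "ray x (-1,0) ?j = (a, snd x)" using True by (simp add: ray_def)
    have "?j < jL \<or> ?j = jL" using a by auto
    then show ?thesis using L e F by auto
  next
    case False
    let ?j = "nat (a - fst x)"
    have e: "ray x (1,0) ?j = (a, snd x)" using False by (simp add: ray_def)
    have "?j < jR \<or> ?j = jR" using a by auto
    then show ?thesis using R e F by auto
  qed
  have vX: "(fst x, a) \<in> X" if a: "snd x - int jD \<le> a" "a \<le> snd x + int jU" for a
  proof (cases "a \<le> snd x")
    case True
    let ?j = "nat (snd x - a)"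
    have e: "ray x (0,-1) ?j = (fst x, a)" using True by (simp add: ray_def)
    have "?j < jD \<or> ?j = jD" using a by auto
    then show ?thesis using D e F by auto
  next
    case False
    let ?j = "nat (a - snd x)"
    have e: "ray x (0,1) ?j = (fst x, a)" using False by (simp add: ray_def)
    have "?j < jU \<or> ?j = jU" using a by auto
    then show ?thesis using U e F by auto
  qed
  have eL: "(fst x - int jL, snd x) = ray x (-1,0) jL" by (simp add: ray_def)
  have eR: "(fst x + int jR, snd x) = ray x (1,0) jR" by (simp add: ray_def)
  have eD: "(fst x, snd x - int jD) = ray x (0,-1) jD" by (simp add: ray_def)
  have eU: "(fst x, snd x + int jU) = ray x (0,1) jU" by (simp add: ray_def)
  have fL: "f (fst x - int jL, snd x) = (fst x - int jL, snd x)" using fixC L(1) eL by metis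
  have fR: "f (fst x + int jR, snd x) = (fst x + int jR, snd x)" using fixC R(1) eR by metis
  have fD: "f (fst x, snd x - int jD) = (fst x, snd x - int jD)" using fixC D(1) eD by metis
  have fU: "f (fst x, snd x + int jU) = (fst x, snd x + int jU)" using fixC U(1) eU by metis
  have h: "\<bar>fst (f (fst x, snd x)) - (fst x - int jL)\<bar> \<le> fst x - (fst x - int jL) \<and>
           \<bar>fst (f (fst x, snd x)) - (fst x + int jR)\<bar> \<le> (fst x + int jR) - fst x"
    using pin[OF cont, of "fst x - int jL" "fst x + int jR" "\<lambda>a. (a, snd x)" "fst x"] hX
      fL fR by (simp add: c2_adj_def)
  have v: "\<bar>snd (f (fst x, snd x)) - (snd x - int jD)\<bar> \<le> snd x - (snd x - int jD) \<and>
           \<bar>snd (f (fst x, snd x)) - (snd x + int jU)\<bar> \<le> (snd x + int jU) - snd x"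
    using pin[OF cont, of "snd x - int jD" "snd x + int jU" "\<lambda>a. (fst x, a)" "snd x"] vX
      fD fU by (simp add: c2_adj_def)
  have "fst (f x) = fst x" using h by simp arith
  moreover have "snd (f x) = snd x" using v by simp arith
  ultimately show ?thesis by (simp add: prod_eq_iff)
qed

lemma c2_sym: "c2_adj x y \<Longrightarrow> c2_adj y x"
  by (auto simp: c2_adj_def)

lemma m_ge3:
  assumes "bounding_curve D s m" shows "m \<ge> 3"
proof (rule ccontr)
  assume m3: "\<not> 3 \<le> m"
  from assms obtain F I where cc: "closed_curve s m"
    and comps: "components_of c1_adj (UNIV - curve_set s m) = {F, I}" "finite F"
    unfolding bounding_curve_def by blast
  have m: "m = 1 \<or> m = 2" using cc m3 unfolding closed_curve_def by auto
  have cs: "curve_set s m = {s 0}"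
  proof (cases "m = 1")
    case True then show ?thesis by (simp add: curve_set_def lessThan_Suc)
  next
    case False
    then have "m = 2" using m by simp
    moreover have "s 0 = s 1" using cc \<open>m = 2\<close> unfolding closed_curve_def by simp
    ultimately show ?thesis by (auto simp: curve_set_def lessThan_Suc numeral_2_eq_2)
  qed
  have Fc: "F \<in> components_of c1_adj (UNIV - {s 0})" using comps cs by auto
  obtain y where y: "y \<in> UNIV - {s 0}" "F = component_of c1_adj (UNIV - {s 0}) y"
    using Fc by (auto simp: components_of_def)
  have yF: "y \<in> F" using y comp_self by metis
  define d where "d = (if snd y \<noteq> snd (s 0) then (1::int,0::int) else (0,1))"
  have ud: "unitdir d" by (simp add: d_def unitdir_def)
  have nc: "ray y d j \<notin> {s 0}" for j
  proof
    assume r: "ray y d j \<in> {s 0}"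
    show False
    proof (cases "snd y \<noteq> snd (s 0)")
      case True
      then have "snd (ray y d j) = snd y" by (simp add: d_def ray_def)
      then show ?thesis using r True by auto
    next
      case False
      then have "snd (ray y d j) = snd y + int j" by (simp add: d_def ray_def)
      then have "j = 0" using r False by auto
      then show ?thesis using r y by simp
    qed
  qed
  show False using ray_first[OF Fc comps(2) yF ud] nc by blast
qed

lemma curve_nbr:
  assumes cc: "closed_curve s m" and m: "m \<ge> 3" and x: "x \<in> curve_set s m"
  shows "\<exists>q\<in>curve_set s m. c2_adj x q"
proof -
  obtain k where k: "k < m" "x = s k" using x by (auto simp: curve_set_def)
  show ?thesis
  proof (cases "Suc k < m")
    case True
    have "s k = s (k+1) \<or> c2_adj (s k) (s (k+1))" using cc True unfolding closed_curve_def by simp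
    moreover have "s k \<noteq> s (k+1)"
    proof -
      from cc have d: "\<forall>i j. i < j \<and> j < m \<and> j - i < m - 1 \<longrightarrow> s i \<noteq> s j"
        unfolding closed_curve_def by blast
      have "k < k+1 \<and> k+1 < m \<and> (k+1) - k < m - 1" using True m by simp
      then show ?thesis using d by blast
    qed
    ultimately show ?thesis using True k by (auto simp: curve_set_def)
  next
    case False
    then have "k = m - 1" using k by simp
    then have xs: "x = s 0" using cc k unfolding closed_curve_def by simp
    from cc have h: "\<forall>i. i + 1 < m \<longrightarrow> s i = s (i + 1) \<or> c2_adj (s i) (s (i + 1))"
      unfolding closed_curve_def by blast
    have "s 0 = s (0+1) \<or> c2_adj (s 0) (s (0+1))" using h[rule_format, of 0] m by simp
    moreover have "s 0 \<noteq> s 1"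
    proof -
      have "(0::nat) < 1 \<and> 1 < m \<and> 1 - 0 < m - 1" using m by simp
      then show ?thesis using cc unfolding closed_curve_def by blast
    qed
    moreover have "x = s 0" by (rule xs)
    moreover have "s 1 \<in> curve_set s m" using m by (simp add: curve_set_def)
    ultimately show ?thesis by auto
  qed
qed

lemma seg2:
  assumes "c2_adj x q" "k x = k q" shows "line_seg k {x,q}"
proof -
  have ne: "x \<noteq> q" using assms by (simp add: c2_adj_def)
  have "(adj_in c2_adj {x,q})\<^sup>*\<^sup>* p p'" if "p \<in> {x,q}" "p' \<in> {x,q}" for p p'
  proof -
    have "c2_adj q x" using assms(1) by (rule c2_sym)
    then have "p = p' \<or> adj_in c2_adj {x,q} p p'"
      using that assms(1) by (auto simp: adj_in_def)
    then show ?thesis by auto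
  qed
  then show ?thesis using ne assms unfolding line_seg_def connected_in_def by auto
qed

lemma line_seg_finite: "line_seg k T \<Longrightarrow> finite T"
  unfolding line_seg_def by (metis card.infinite not_numeral_le_zero)

lemma exists_max_seg:
  assumes "finite C" "line_seg k T0" "T0 \<subseteq> C" "x \<in> T0"
  shows "\<exists>T. max_seg_in k C T \<and> x \<in> T"
proof -
  let ?S = "{T. line_seg k T \<and> T \<subseteq> C \<and> x \<in> T}"
  have fin: "finite ?S" by (rule finite_subset[of _ "Pow C"]) (use assms(1) in auto)
  have ne: "T0 \<in> ?S" using assms by auto
  have "Max (card ` ?S) \<in> card ` ?S" using fin ne by (intro Max_in) auto
  then obtain T where T: "T \<in> ?S" "card T = Max (card ` ?S)" by auto
  have mx: "card T' \<le> card T" if "T' \<in> ?S" for T'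
    using T(2) fin that by (simp add: Max_ge)
  have "max_seg_in k C T"
    unfolding max_seg_in_def
  proof (intro conjI allI impI)
    show "line_seg k T" "T \<subseteq> C" using T by auto
    fix T' assume a: "line_seg k T' \<and> T' \<subseteq> C \<and> T \<subseteq> T'"
    then have "T' \<in> ?S" using T by auto
    then have "card T' \<le> card T" by (rule mx)
    moreover have "finite T'" using a assms(1) finite_subset by blast
    ultimately show "T' = T" using a card_seteq by blast
  qed
  then show ?thesis using T by auto
qed

lemma seg_contig:
  assumes "line_seg k T" "Min (fst ` T) \<le> a" "a \<le> Max (fst ` T)"
  shows "\<exists>z\<in>T. fst z = a"
proof -
  have fin: "finite T" using assms(1) by (rule line_seg_finite)
  have ne: "T \<noteq> {}" using assms(1) unfolding line_seg_def by auto
  have "Min (fst ` T) \<in> fst ` T" using fin ne by (intro Min_in) auto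
  then obtain p where p: "p \<in> T" "fst p = Min (fst ` T)" by (metis imageE)
  have "Max (fst ` T) \<in> fst ` T" using fin ne by (intro Max_in) auto
  then obtain q where q: "q \<in> T" "fst q = Max (fst ` T)" by (metis imageE)
  have conn: "(adj_in c2_adj T)\<^sup>*\<^sup>* p q"
    using assms(1) p q unfolding line_seg_def connected_in_def by blast
  have "\<forall>a. fst p \<le> a \<and> a \<le> fst z \<longrightarrow> (\<exists>w\<in>T. fst w = a)"
    if "(adj_in c2_adj T)\<^sup>*\<^sup>* p z" for z
    using that
  proof (induction rule: rtranclp_induct)
    case base then show ?case using p by force
  next
    case (step y z)
    show ?case
    proof (intro allI impI)
      fix a assume a: "fst p \<le> a \<and> a \<le> fst z"
      show "\<exists>w\<in>T. fst w = a"
      proof (cases "a \<le> fst y")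
        case True then show ?thesis using step.IH a by blast
      next
        case False
        then have "a = fst z" using a step.hyps(2) by (auto simp: adj_in_def c2_adj_def)
        then show ?thesis using step.hyps(2) by (auto simp: adj_in_def)
      qed
    qed
  qed
  then have "\<forall>a. fst p \<le> a \<and> a \<le> fst q \<longrightarrow> (\<exists>w\<in>T. fst w = a)" using conn by blast
  then show ?thesis using assms(2,3) p q by auto
qed

lemma diag_fixed:
  assumes cont: "digitally_continuous X c2_adj f"
    and ls: "line_seg k T" and TX: "T \<subseteq> X" and fixE: "\<forall>b\<in>seg_endpoints T. f b = b"
    and x: "x \<in> T" and sg: "\<sigma> = 1 \<or> \<sigma> = -1" and ln: "\<forall>z\<in>T. snd z = \<sigma> * fst z + e"
  shows "f x = x"
proof -
  have fin: "finite T" using ls by (rule line_seg_finite)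
  define lo where "lo = Min (fst ` T)"
  define hi where "hi = Max (fst ` T)"
  define P where "P a = (a, \<sigma> * a + e)" for a
  have inT: "P a \<in> T" if "lo \<le> a" "a \<le> hi" for a
  proof -
    have "Min (fst ` T) \<le> a" "a \<le> Max (fst ` T)" using that lo_def hi_def by auto
    then obtain z where "z \<in> T" "fst z = a" using seg_contig[OF ls] by blast
    moreover then have "snd z = \<sigma> * a + e" using ln by auto
    ultimately show ?thesis by (metis P_def prod.collapse)
  qed
  have xr: "lo \<le> fst x" "fst x \<le> hi" using fin x lo_def hi_def by auto
  have xP: "x = P (fst x)" using ln x by (simp add: P_def prod_eq_iff)
  have adj: "c2_adj (P a) (P (a+1))" for a
    using sg by (auto simp: P_def c2_adj_def algebra_simps)
  have flo: "f (P lo) = P lo"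
  proof -
    have "P lo \<in> seg_endpoints T" using inT[of lo] xr by (auto simp: seg_endpoints_def P_def lo_def)
    then show ?thesis using fixE by blast
  qed
  have fhi: "f (P hi) = P hi"
  proof -
    have "P hi \<in> seg_endpoints T" using inT[of hi] xr by (auto simp: seg_endpoints_def P_def hi_def)
    then show ?thesis using fixE by blast
  qed
  have b: "\<bar>fst (f (P (fst x))) - fst (P lo)\<bar> \<le> fst x - lo \<and> \<bar>fst (f (P (fst x))) - fst (P hi)\<bar> \<le> hi - fst x
    \<and> \<bar>snd (f (P (fst x))) - snd (P lo)\<bar> \<le> fst x - lo \<and> \<bar>snd (f (P (fst x))) - snd (P hi)\<bar> \<le> hi - fst x"
    by (rule pin[OF cont _ adj flo fhi xr]) (use inT TX in auto)
  then have b': "\<bar>fst (f x) - lo\<bar> \<le> fst x - lo \<and> \<bar>fst (f x) - hi\<bar> \<le> hi - fst x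
    \<and> \<bar>snd (f x) - (\<sigma> * lo + e)\<bar> \<le> fst x - lo \<and> \<bar>snd (f x) - (\<sigma> * hi + e)\<bar> \<le> hi - fst x"
    using xP by (simp add: P_def)
  have "fst (f x) = fst x" using b' by arith
  moreover have sx: "snd x = \<sigma> * fst x + e" using ln x by auto
  moreover have "snd (f x) = snd x"
    using sg
  proof
    assume s1: "\<sigma> = 1"
    then have "snd x = fst x + e" using sx by simp
    moreover have "\<bar>snd (f x) - (lo + e)\<bar> \<le> fst x - lo \<and> \<bar>snd (f x) - (hi + e)\<bar> \<le> hi - fst x"
      using b' s1 by simp
    ultimately show ?thesis by arith
  next
    assume s1: "\<sigma> = -1"
    then have "snd x = - fst x + e" using sx by simp
    moreover have "\<bar>snd (f x) - (- lo + e)\<bar> \<le> fst x - lo \<and> \<bar>snd (f x) - (- hi + e)\<bar> \<le> hi - fst x"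
      using b' s1 by simp
    ultimately show ?thesis by arith
  qed
  ultimately show ?thesis by (simp add: prod_eq_iff)
qed

lemma curve_fixed:
  assumes cont: "digitally_continuous X c2_adj f"
    and cc: "closed_curve s m" and m: "m \<ge> 3" and C: "C = curve_set s m" and CX: "C \<subseteq> X"
    and fixB: "\<forall>b\<in>B1_of C \<union> B2_of C. f b = b" and x: "x \<in> C"
  shows "f x = x"
proof -
  have fin: "finite C" using C by (simp add: curve_set_def)
  obtain q where q: "q \<in> C" "c2_adj x q" using curve_nbr[OF cc m] x C by blast
  have sub: "{x,q} \<subseteq> C" using q x by auto
  have hv: "f x = x" if k: "k = key_h \<or> k = key_v" "k x = k q" for k
  proof -
    obtain T where T: "max_seg_in k C T" "x \<in> T"
      using exists_max_seg[OF fin seg2[OF q(2) k(2)] sub insertI1] by auto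
    have "x \<in> B1_of C" using T k(1) unfolding B1_of_def by blast
    then show ?thesis using fixB by blast
  qed
  have dg: "f x = x" if k: "k = key_d1 \<or> k = key_d2" "k x = k q" for k
  proof -
    obtain T where T: "max_seg_in k C T" "x \<in> T"
      using exists_max_seg[OF fin seg2[OF q(2) k(2)] sub insertI1] by auto
    have ls: "line_seg k T" and TC: "T \<subseteq> C" using T(1) unfolding max_seg_in_def by auto
    have "seg_endpoints T \<subseteq> B2_of C" using T(1) k(1) unfolding B2_of_def by blast
    then have fe: "\<forall>b\<in>seg_endpoints T. f b = b" using fixB by blast
    have kc: "\<forall>z\<in>T. k z = k x" using ls T(2) unfolding line_seg_def by blast
    show ?thesis using k(1)
    proof
      assume "k = key_d1"
      then have "\<forall>z\<in>T. snd z = 1 * fst z + (- key_d1 x)" using kc by (auto simp: key_d1_def)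
      then show ?thesis using diag_fixed[OF cont ls _ fe T(2), where \<sigma>=1 and e="- key_d1 x"] TC CX by auto
    next
      assume "k = key_d2"
      then have "\<forall>z\<in>T. snd z = (-1) * fst z + key_d2 x" using kc by (auto simp: key_d2_def)
      then show ?thesis using diag_fixed[OF cont ls _ fe T(2), where \<sigma>="-1" and e="key_d2 x"] TC CX by auto
    qed
  qed
  have "key_h x = key_h q \<or> key_v x = key_v q \<or> key_d1 x = key_d1 q \<or> key_d2 x = key_d2 q"
    using q(2) by (auto simp: c2_adj_def key_h_def key_v_def key_d1_def key_d2_def)
  then show ?thesis using hv dg by blast
qed

lemma B1_sub: "B1_of C \<subseteq> C" unfolding B1_of_def max_seg_in_def by auto
lemma B2_sub: "B2_of C \<subseteq> C" unfolding B2_of_def max_seg_in_def seg_endpoints_def by auto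

theorem mainTheorem5:
  fixes X :: "pt set" and n :: nat and V C :: "nat \<Rightarrow> pt set"
  assumes "\<And>i. i < n \<Longrightarrow> V i \<subseteq> X"
    and "\<And>i. i < n \<Longrightarrow> digital_disk (V i) \<and> thick (V i) \<and> digitally_convex (V i)"
    and "\<And>i. i < n \<Longrightarrow> \<exists>s m. bounding_curve (V i) s m \<and> C i = curve_set s m"
  shows "freezing_set X c2_adj
           ((X - (\<Union>i<n. V i)) \<union> (\<Union>i<n. B1_of (C i) \<union> B2_of (C i)))"
proof -
  let ?A = "(X - (\<Union>i<n. V i)) \<union> (\<Union>i<n. B1_of (C i) \<union> B2_of (C i))"
  have CV: "C i \<subseteq> V i" if ii: "i < n" for i
  proof -
    obtain s m where "bounding_curve (V i) s m" "C i = curve_set s m" using assms(3)[OF ii] by blast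
    then show ?thesis unfolding bounding_curve_def by auto
  qed
  have AX: "?A \<subseteq> X" using CV assms(1) B1_sub B2_sub by blast
  show ?thesis unfolding freezing_set_def
  proof (intro conjI allI impI ballI)
    show "?A \<subseteq> X" by (rule AX)
    fix f x assume fa: "digitally_continuous X c2_adj f \<and> (\<forall>a\<in>?A. f a = a)" and x: "x \<in> X"
    have cont: "digitally_continuous X c2_adj f" using fa by blast
    show "f x = x"
    proof (cases "x \<in> (\<Union>i<n. V i)")
      case False then show ?thesis using fa x by blast
    next
      case True
      then obtain i where i: "i < n" "x \<in> V i" by blast
      obtain s m where bc: "bounding_curve (V i) s m" and Ci: "C i = curve_set s m"
        using assms(3)[OF i(1)] by blast
      obtain F I where cc: "closed_curve s m"
        and comps: "components_of c1_adj (UNIV - curve_set s m) = {F, I}" "finite F"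
        and Vi: "V i = curve_set s m \<union> F"
        using bc unfolding bounding_curve_def by blast
      have m: "m \<ge> 3" by (rule m_ge3[OF bc])
      have fixB: "\<forall>b\<in>B1_of (C i) \<union> B2_of (C i). f b = b" using fa i(1) by blast
      have CX: "C i \<subseteq> X" using CV assms(1) i(1) by blast
      have cfix: "\<forall>c\<in>C i. f c = c"
        using curve_fixed[OF cont cc m Ci CX fixB] by blast
      show ?thesis
      proof (cases "x \<in> C i")
        case True then show ?thesis using cfix by blast
      next
        case False
        then have xF: "x \<in> F" using i(2) Vi Ci by blast
        have Fc: "F \<in> components_of c1_adj (UNIV - C i)" using comps Ci by auto
        have FX: "F \<subseteq> X" using Vi assms(1) i(1) by blast
        show ?thesis by (rule interior_fixed[OF cont Fc comps(2) xF FX CX cfix])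
      qed
    qed
  qed
qed

end
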